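(* Assume the target tube $\mathscr{T}_N$ is closed, $\mathcal{U}$ is compact, and each $f_k$ is continuous on $\mathcal{X}\times\mathcal{U}$. Let $\mathcal{E}\subseteq\mathcal{W}$ be a measurable set with $\mathbb{P}_w(w\in\mathcal{E})>0$, and let $\pi^\ast\in\mathcal{M}$ be the Markov policy built from Borel-measurable minimizers $\mu_k^\ast$ of the min-max recursion $J_N^\ast=g_N$, $J_k^\ast(x)=\inf_{u\in\mathcal{U}}\sup_{w\in\mathcal{E}}[J^\ast_{k+1}(f_k(x,u)+w)+g_k(x)]$, $g_k=1-\mathbf{1}_{\mathcal{T}_k}$. Then for every $k\in\mathbb{N}_{[0,N-1]}$ and every $y\in\mathcal{R}_k(\mathscr{T}_N,\mathcal{E})$, $$\mathbb{P}^{\pi^\ast}_{k}\Big(\bigcap_{t=k+1}^N\{x_t\in\mathcal{T}_t\}\ \Big|\ x_k=y,\ (w_k,\dots,w_{N-1})\in\mathcal{E}^{N-k}\Big)=1.$$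
   Context: Fix $N\in\mathbb{N}$, $N>0$, and write $\mathbb{N}_{[a,b]}=\{a,a+1,\dots,b\}$. Consider the discrete-time system $x_{k+1}=f_k(x_k,u_k)+w_k$, $k=0,\dots,N-1$, with state $x_k\in\mathcal{X}\subseteq\mathbb{R}^n$, input $u_k\in\mathcal{U}\subseteq\mathbb{R}^m$, disturbance $w_k\in\mathcal{W}\subseteq\mathbb{R}^n$ with $0\in\mathcal{W}$, and $f_k:\mathcal{X}\times\mathcal{U}\to\mathcal{X}$. A target tube is a sequence $\mathscr{T}_N=[\mathcal{T}_0,\dots,\mathcal{T}_N]$ of subsets of $\mathcal{X}$; it is called closed (resp. convex) if every $\mathcal{T}_k$ is closed (resp. convex). $\mathbf{1}_S$ denotes the indicator function of a set $S$. In the stochastic setting, $w_0,\dots,w_{N-1}$ are i.i.d. random vectors with an absolutely continuous distribution $\mathbb{P}_w$ on $\mathcal{W}$. A Markov policy is a tuple $\pi=[\mu_0,\dots,\mu_{N-1}]$ of universally measurable maps $\mu_k:\mathcal{X}\to\mathcal{U}$; $\mathcal{M}$ denotes the set of Markov policies. For $\pi\in\mathcal{M}$ and $x_k=y$, $\mathbb{P}^\pi_k(\cdot\,|\,y)$ denotes the probability law of $(x_{k+1},\dots,x_N)$ generated by $x_{t+1}=f_t(x_t,\mu_t(x_t))+w_t$. For $\mathcal{E}\subseteq\mathcal{W}$ and $k\in\mathbb{N}_{[0,N-1]}$, the disturbance minimal reach set $\mathcal{R}_k(\mathscr{T}_N,\mathcal{E})$ is the set of $x_k\in\mathcal{T}_k$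 for which there exist state-feedback laws $\nu_t:\mathcal{X}\to\mathcal{U}$, $t\in\mathbb{N}_{[k,N-1]}$ (no measurability required), such that for every disturbance sequence $w_k,\dots,w_{N-1}\in\mathcal{E}$ the trajectory $x_{t+1}=f_t(x_t,\nu_t(x_t))+w_t$ satisfies $x_t\in\mathcal{T}_t$ for all $t\in\mathbb{N}_{[k+1,N]}$; also $\mathcal{R}_N(\mathscr{T}_N,\mathcal{E})=\mathcal{T}_N$. *)

theory Defs
  imports "HOL-Probability.Probability"
begin

text \<open>The value
  traj f nu k y ws j is the state at absolute time k + j.\<close>
primrec traj ::
  "(nat \<Rightarrow> 'x::plus \<Rightarrow> 'u \<Rightarrow> 'x) \<Rightarrow> (nat \<Rightarrow> 'x \<Rightarrow> 'u) \<Rightarrow> nat \<Rightarrow> 'x \<Rightarrow> (nat \<Rightarrow> 'x) \<Rightarrow> nat \<Rightarrow> 'x"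
where
  "traj f nu k y ws 0 = y"
| "traj f nu k y ws (Suc j) =
     f (k + j) (traj f nu k y ws j) (nu (k + j) (traj f nu k y ws j)) + ws (k + j)"

definition stage_cost :: "(nat \<Rightarrow> 'x set) \<Rightarrow> nat \<Rightarrow> 'x \<Rightarrow> real" where
  "stage_cost T k x = 1 - indicator (T k) x"

definition reach_set ::
  "(nat \<Rightarrow> 'x::plus \<Rightarrow> 'u \<Rightarrow> 'x) \<Rightarrow> 'x set \<Rightarrow> 'u set \<Rightarrow> nat \<Rightarrow> (nat \<Rightarrow> 'x set)
    \<Rightarrow> 'x set \<Rightarrow> nat \<Rightarrow> 'x set"
where
  "reach_set f X U N T E k =
     (if k = N then T N
      else {y \<in> T k. \<exists>nu. (\<forall>t\<in>{k..<N}. \<forall>x\<in>X. nu t x \<in> U) \<and>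
              (\<forall>ws. (\<forall>t\<in>{k..<N}. ws t \<in> E) \<longrightarrow>
                     (\<forall>t\<in>{k+1..N}. traj f nu k y ws (t - k) \<in> T t))})"

definition dist_law :: "'x measure \<Rightarrow> nat \<Rightarrow> nat \<Rightarrow> (nat \<Rightarrow> 'x) measure" where
  "dist_law Pw N k = PiM {k..<N} (\<lambda>_. Pw)"

definition cond_safety_prob ::
  "'x measure \<Rightarrow> (nat \<Rightarrow> 'x::plus \<Rightarrow> 'u \<Rightarrow> 'x) \<Rightarrow> (nat \<Rightarrow> 'x \<Rightarrow> 'u) \<Rightarrow> nat
    \<Rightarrow> (nat \<Rightarrow> 'x set) \<Rightarrow> 'x set \<Rightarrow> nat \<Rightarrow> 'x \<Rightarrow> real"
where
  "cond_safety_prob Pw f mu N T E k y =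
     (let M = dist_law Pw N k;
          B = {ws \<in> space M. \<forall>t\<in>{k..<N}. ws t \<in> E};
          A = {ws \<in> space M. \<forall>t\<in>{k+1..N}. traj f mu k y ws (t - k) \<in> T t}
      in measure M (A \<inter> B) / measure M B)"

end

theory Submission
  imports Defs
begin


lemma traj_prefix:
  "(\<forall>t<k+j. ws t = ws' t) \<Longrightarrow> traj f nu k y ws j = traj f nu k y ws' j"
  by (induct j) auto

theorem proposition1:
  fixes N :: nat
    and X W :: "(real ^ 'n) set"
    and U :: "(real ^ 'm) set"
    and f :: "nat \<Rightarrow> real ^ 'n \<Rightarrow> real ^ 'm \<Rightarrow> real ^ 'n"
    and T :: "nat \<Rightarrow> (real ^ 'n) set"
    and Pw :: "(real ^ 'n) measure"
    and E :: "(real ^ 'n) set"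
    and J :: "nat \<Rightarrow> real ^ 'n \<Rightarrow> real"
    and mu :: "nat \<Rightarrow> real ^ 'n \<Rightarrow> real ^ 'm"
  assumes N_pos: "N > 0"
    and W_zero: "0 \<in> W"
    and f_maps: "\<forall>k<N. \<forall>x\<in>X. \<forall>u\<in>U. f k x u \<in> X"
    and X_closed_dist: "\<forall>x\<in>X. \<forall>w\<in>W. x + w \<in> X"
    and tube_sub: "\<forall>k\<le>N. T k \<subseteq> X"
    and tube_closed: "\<forall>k\<le>N. closed (T k)"
    and U_compact: "compact U"
    and f_cont: "\<forall>k<N. continuous_on (X \<times> U) (\<lambda>(x, u). f k x u)"
    and Pw_prob: "prob_space Pw"
    and Pw_sets: "sets Pw = sets borel"
    and Pw_on_W: "W \<in> sets borel" "emeasure Pw W = 1"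
    and Pw_ac: "absolutely_continuous lborel Pw"
    and E_meas: "E \<in> sets borel"
    and E_sub: "E \<subseteq> W"
    and E_pos: "measure Pw E > 0"
    and J_N: "\<forall>x\<in>X. J N x = stage_cost T N x"
    and J_rec: "\<forall>k<N. \<forall>x\<in>X.
                  J k x = (INF u\<in>U. SUP w\<in>E. J (Suc k) (f k x u + w) + stage_cost T k x)"
    and mu_in_U: "\<forall>k<N. \<forall>x\<in>X. mu k x \<in> U"
    and mu_meas: "\<forall>k<N. mu k \<in> borel_measurable (restrict_space borel X)"
    and mu_min: "\<forall>k<N. \<forall>x\<in>X.
                  (SUP w\<in>E. J (Suc k) (f k x (mu k x) + w) + stage_cost T k x) = J k x"
  shows "\<forall>k<N. \<forall>y\<in>reach_set f X U N T E k. cond_safety_prob Pw f mu N T E k y = 1"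
  proof -
  have g01: "\<And>k x. 0 \<le> stage_cost T k x \<and> stage_cost T k x \<le> 1"
    by (simp add: stage_cost_def indicator_def)
  have g0: "\<And>k x. stage_cost T k x = 0 \<longleftrightarrow> x \<in> T k"
    by (simp add: stage_cost_def indicator_def)
  have "E \<noteq> {}" using E_pos by auto
  then obtain w0 where w0: "w0 \<in> E" by blast
  have fw: "\<And>k x u w. k<N \<Longrightarrow> x\<in>X \<Longrightarrow> u\<in>U \<Longrightarrow> w\<in>E \<Longrightarrow> f k x u + w \<in> X"
    using f_maps X_closed_dist E_sub by blast
  have diffS: "\<And>k. k < N \<Longrightarrow> real (N - k) = real (N - Suc k) + 1"
    by (metis Suc_diff_Suc of_nat_Suc add.commute)
  have bnd: "\<forall>x\<in>X. 0 \<le> J k x \<and> J k x \<le> real (N-k) + 1" if kN: "k \<le> N" for k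
    using kN
  proof (induct k rule: inc_induct)
    case base then show ?case using J_N g01 by simp
  next
    case (step k)
    have kN: "k < N" using step by simp
    have IH: "\<forall>x\<in>X. 0 \<le> J (Suc k) x \<and> J (Suc k) x \<le> real (N - Suc k) + 1" using step by simp
    show ?case
    proof
      fix x assume x: "x \<in> X"
      define S where "S u = (SUP w\<in>E. J (Suc k) (f k x u + w) + stage_cost T k x)" for u
      have Sb: "0 \<le> S u \<and> S u \<le> real (N - k) + 1" if u: "u \<in> U" for u
      proof -
        have tb: "0 \<le> J (Suc k) (f k x u + w) + stage_cost T k x \<and>
                  J (Suc k) (f k x u + w) + stage_cost T k x \<le> real (N-k)+1" if "w\<in>E" for w
        proof -
          have "0 \<le> J (Suc k) (f k x u + w) \<and> J (Suc k) (f k x u + w) \<le> real (N - Suc k) + 1"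
            using IH fw[OF kN x u that] by blast
          then show ?thesis using g01[of k x] diffS[OF kN] by linarith
        qed
        have bdd: "bdd_above ((\<lambda>w. J (Suc k) (f k x u + w) + stage_cost T k x) ` E)"
          by (rule bdd_aboveI2[where M="real (N-k)+1"]) (use tb in blast)
        have "0 \<le> S u" unfolding S_def using tb[OF w0] by (intro cSUP_upper2[OF bdd w0]) auto
        moreover have "S u \<le> real (N-k)+1" unfolding S_def using tb w0 by (intro cSUP_least) auto
        ultimately show ?thesis by simp
      qed
      have Jk: "J k x = (INF u\<in>U. S u)" using J_rec kN x S_def by simp
      have U_ne: "U \<noteq> {}" using mu_in_U kN x by blast
      have bddb: "bdd_below (S ` U)" by (rule bdd_belowI2[where m=0]) (use Sb in blast)
      have "0 \<le> J k x" unfolding Jk using Sb U_ne by (intro cINF_greatest) auto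
      moreover have "J k x \<le> real(N-k)+1" unfolding Jk using Sb mu_in_U kN x
        by (intro cINF_lower2[OF bddb, of "mu k x"]) auto
      ultimately show "0 \<le> J k x \<and> J k x \<le> real (N-k)+1" by simp
    qed
  qed
  have Sbnd: "0 \<le> (SUP w\<in>E. J (Suc k) (f k x u + w) + stage_cost T k x)"
    and Sbdd: "bdd_above ((\<lambda>w. J (Suc k) (f k x u + w) + stage_cost T k x) ` E)"
    if kN: "k<N" and x: "x\<in>X" and u: "u\<in>U" for k x u
  proof -
    have tb: "0 \<le> J (Suc k) (f k x u + w) + stage_cost T k x \<and>
              J (Suc k) (f k x u + w) + stage_cost T k x \<le> real (N-k)+1" if "w\<in>E" for w
    proof -
      have "0 \<le> J (Suc k) (f k x u + w) \<and> J (Suc k) (f k x u + w) \<le> real (N - Suc k) + 1"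
        using bnd[of "Suc k"] kN fw[OF kN x u that] by simp
      then show ?thesis using g01[of k x] diffS[OF kN] by linarith
    qed
    show bdd: "bdd_above ((\<lambda>w. J (Suc k) (f k x u + w) + stage_cost T k x) ` E)"
      by (rule bdd_aboveI2[where M="real (N-k)+1"]) (use tb in blast)
    show "0 \<le> (SUP w\<in>E. J (Suc k) (f k x u + w) + stage_cost T k x)"
      using tb[OF w0] by (intro cSUP_upper2[OF bdd w0]) auto
  qed
  have Cl: "x \<in> T k \<and> (\<forall>w\<in>E. J (Suc k) (f k x (mu k x) + w) = 0)"
    if k: "k<N" and x: "x\<in>X" and J0: "J k x = 0" for k x
  proof -
    have u: "mu k x \<in> U" using mu_in_U k x by blast
    have nn: "0 \<le> J (Suc k) (f k x (mu k x) + w)" if "w\<in>E" for w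
      using bnd[of "Suc k"] k fw[OF k x u that] by auto
    have sup0: "(SUP w\<in>E. J (Suc k) (f k x (mu k x) + w) + stage_cost T k x) = 0"
      using mu_min k x J0 by auto
    have le: "J (Suc k) (f k x (mu k x) + w) + stage_cost T k x \<le> 0" if "w\<in>E" for w
      using cSUP_upper[OF that Sbdd[OF k x u]] sup0 by simp
    have "stage_cost T k x = 0" using le[OF w0] nn[OF w0] g01[of k x] by linarith
    moreover have "\<forall>w\<in>E. J (Suc k) (f k x (mu k x) + w) = 0"
    proof
      fix w assume w: "w \<in> E"
      show "J (Suc k) (f k x (mu k x) + w) = 0" using le[OF w] nn[OF w] g01[of k x] by linarith
    qed
    ultimately show ?thesis using g0 by blast
  qed
  show ?thesis
  proof (intro allI impI ballI)
    fix k y assume kN: "k < N" and y: "y \<in> reach_set f X U N T E k"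
    then obtain nu where yT: "y \<in> T k" and nuU: "\<forall>t\<in>{k..<N}. \<forall>x\<in>X. nu t x \<in> U"
      and nuS: "\<forall>ws. (\<forall>t\<in>{k..<N}. ws t \<in> E) \<longrightarrow> (\<forall>t\<in>{k+1..N}. traj f nu k y ws (t - k) \<in> T t)"
      unfolding reach_set_def by auto
    have yX: "y \<in> X" using yT tube_sub kN less_imp_le by blast
    have nuX: "\<forall>ws. (\<forall>t\<in>{k..<N}. ws t \<in> E) \<longrightarrow> traj f nu k y ws j \<in> X" if "j \<le> N - k" for j
      using that
    proof (induct j)
      case 0 then show ?case using yX by simp
    next
      case (Suc j)
      show ?case
      proof (intro allI impI)
        fix ws assume ws: "\<forall>t\<in>{k..<N}. ws t \<in> E"
        have kj: "k + j < N" using Suc by simp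
        have xj: "traj f nu k y ws j \<in> X" using Suc ws by simp
        show "traj f nu k y ws (Suc j) \<in> X"
          using fw[OF kj xj _ ] nuU xj kj ws by simp
      qed
    qed
    have nuJ: "\<forall>ws. (\<forall>t\<in>{k..<N}. ws t \<in> E) \<longrightarrow> J (k+j) (traj f nu k y ws j) = 0"
      if "j \<le> N - k" for j
      using that
    proof (induct j rule: inc_induct)
      case base
      show ?case
      proof (intro allI impI)
        fix ws assume ws: "\<forall>t\<in>{k..<N}. ws t \<in> E"
        have "traj f nu k y ws (N - k) \<in> T N" using nuS ws kN by auto
        moreover have "traj f nu k y ws (N - k) \<in> X" using nuX ws by simp
        ultimately show "J (k + (N - k)) (traj f nu k y ws (N - k)) = 0"
          using J_N g0 kN by simp
      qed
    next
      case (step j)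
      have kj: "k + j < N" using step by simp
      have IH: "\<forall>ws. (\<forall>t\<in>{k..<N}. ws t \<in> E) \<longrightarrow> J (Suc (k + j)) (traj f nu k y ws (Suc j)) = 0"
        using step by simp
      show ?case
      proof (intro allI impI)
        fix ws assume ws: "\<forall>t\<in>{k..<N}. ws t \<in> E"
        define x where "x = traj f nu k y ws j"
        have xX: "x \<in> X" using nuX ws kj x_def by simp
        define u where "u = nu (k+j) x"
        have uU: "u \<in> U" using nuU xX kj u_def by simp
        have xT: "x \<in> T (k+j)"
        proof (cases j)
          case 0 then show ?thesis using yT x_def by simp
        next
          case (Suc j')
          have "k + j \<in> {k+1..N}" using Suc kj by simp
          then have "traj f nu k y ws (k + j - k) \<in> T (k+j)" using nuS ws by blast
          then show ?thesis using x_def by simp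
        qed
        have z: "J (Suc (k+j)) (f (k+j) x u + w) + stage_cost T (k+j) x = 0" if w: "w \<in> E" for w
        proof -
          define ws' where "ws' = ws(k+j := w)"
          have ws': "\<forall>t\<in>{k..<N}. ws' t \<in> E" using ws w ws'_def by auto
          have "traj f nu k y ws' j = x" unfolding x_def by (rule traj_prefix) (simp add: ws'_def)
          then have "traj f nu k y ws' (Suc j) = f (k+j) x u + w" by (simp add: u_def ws'_def)
          moreover have "J (Suc (k + j)) (traj f nu k y ws' (Suc j)) = 0" using IH ws' by blast
          ultimately show ?thesis using xT g0 by simp
        qed
        have "(SUP w\<in>E. J (Suc (k+j)) (f (k+j) x u + w) + stage_cost T (k+j) x) = (SUP w\<in>E. (0::real))"
          using z by (intro SUP_cong) auto
        also have "\<dots> = 0" using w0 by (intro cSUP_const) auto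
        finally have s0: "(SUP w\<in>E. J (Suc (k+j)) (f (k+j) x u + w) + stage_cost T (k+j) x) = 0" .
        have bddb: "bdd_below ((\<lambda>u. SUP w\<in>E. J (Suc (k+j)) (f (k+j) x u + w) + stage_cost T (k+j) x) ` U)"
          by (rule bdd_belowI2[where m=0]) (use Sbnd[OF kj xX] in blast)
        have "J (k+j) x \<le> 0"
          using J_rec kj xX cINF_lower[OF bddb uU] s0 by simp
        moreover have "0 \<le> J (k+j) x" using bnd[of "k+j"] kj xX by simp
        ultimately show "J (k + j) (traj f nu k y ws j) = 0" using x_def by simp
      qed
    qed
    have Jy: "J k y = 0" using nuJ[of 0] spec[OF nuJ[of 0], of "\<lambda>_. w0"] w0 by simp
    have muJ: "\<forall>ws. (\<forall>t\<in>{k..<N}. ws t \<in> E) \<longrightarrow> traj f mu k y ws j \<in> X \<and> J (k+j) (traj f mu k y ws j) = 0"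
      if "j \<le> N - k" for j
      using that
    proof (induct j)
      case 0 then show ?case using yX Jy by simp
    next
      case (Suc j)
      show ?case
      proof (intro allI impI)
        fix ws assume ws: "\<forall>t\<in>{k..<N}. ws t \<in> E"
        have kj: "k + j < N" using Suc by simp
        have xj: "traj f mu k y ws j \<in> X" and Jj: "J (k+j) (traj f mu k y ws j) = 0" using Suc ws by auto
        have wE: "ws (k+j) \<in> E" using ws kj by simp
        show "traj f mu k y ws (Suc j) \<in> X \<and> J (k + Suc j) (traj f mu k y ws (Suc j)) = 0"
          using fw[OF kj xj _ wE] mu_in_U kj xj Cl[OF kj xj Jj] wE by simp
      qed
    qed
    have muT: "\<forall>t\<in>{k+1..N}. traj f mu k y ws (t - k) \<in> T t" if ws: "\<forall>t\<in>{k..<N}. ws t \<in> E" for ws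
    proof
      fix t assume t: "t \<in> {k+1..N}"
      have h: "traj f mu k y ws (t-k) \<in> X \<and> J t (traj f mu k y ws (t-k)) = 0"
        using muJ[of "t-k"] t ws by auto
      show "traj f mu k y ws (t - k) \<in> T t"
      proof (cases "t < N")
        case True then show ?thesis using Cl[of t] h by blast
      next
        case False then have "t = N" using t by simp
        then show ?thesis using h J_N g0 by metis
      qed
    qed
    define I where "I = {k..<N}"
    define M where "M = dist_law Pw N k"
    have spPw: "space Pw = UNIV" using Pw_sets by (metis sets_eq_imp_space_eq space_borel)
    have spM: "space M = PiE I (\<lambda>_. UNIV)" unfolding M_def dist_law_def I_def by (simp add: space_PiM spPw)
    define B where "B = {ws \<in> space M. \<forall>t\<in>{k..<N}. ws t \<in> E}"
    define A where "A = {ws \<in> space M. \<forall>t\<in>{k+1..N}. traj f mu k y ws (t - k) \<in> T t}"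
    have AB: "A \<inter> B = B" using muT unfolding A_def B_def by auto
    have BE: "B = PiE I (\<lambda>_. E)" unfolding B_def spM I_def by (auto simp: PiE_def)
    interpret FP: finite_product_prob_space "\<lambda>_. Pw" I
      by (simp add: finite_product_prob_space_def finite_product_sigma_finite_def
          product_prob_space_def product_sigma_finite_def prob_space_imp_sigma_finite
          Pw_prob finite_product_sigma_finite_axioms_def I_def product_prob_space_axioms_def)
    have "measure M B = (\<Prod>i\<in>I. measure Pw E)"
      unfolding BE M_def dist_law_def I_def[symmetric]
      by (rule FP.finite_measure_PiM_emb) (simp add: Pw_sets E_meas)
    then have "measure M B > 0" using E_pos by simp
    then show "cond_safety_prob Pw f mu N T E k y = 1"
      unfolding cond_safety_prob_def Let_def M_def[symmetric] B_def[symmetric] A_def[symmetric] AB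
      by simp
  qed
qed

end
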